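(* For $n\ge 2$, let $\overline{\mathcal M}_{=}(n)$ be the number of MAU pairs $(u,v)$ of binary words with $|u|=|v|=n$ and $|u|_c=|v|_c$ for all $c\in\{a,b\}$. Then $$\overline{\mathcal M}_{=}(n)=2\sum_{i=1}^{n-1}\frac{1}{n-1}\binom{n-1}{i}\binom{n-1}{i-1}.$$
   Context: Let $\Sigma=\{a,b\}$. For a word $w$ and a letter $c$, $|w|_c$ denotes the number of occurrences of $c$ in $w$. Two words $x,y$ are abelian equivalent, written $x\sim_{\mathrm{abl}}y$, if $|x|_c=|y|_c$ for all $c\in\Sigma$. For words $u,v$: a pair $(x,y)$ is an internal abelian-border of $(u,v)$ if $x$ is a nonempty proper suffix of $u$, $y$ is a proper prefix of $v$, and $x\sim_{\mathrm{abl}}y$; it is an external abelian-border of $(u,v)$ if $x$ is a nonempty proper prefix of $u$, $y$ is a proper suffix of $v$, and $x\sim_{\mathrm{abl}}y$. The pair $(u,v)$ is mutually abelian-bordered (MAB) if it has both an internal and an external abelian-border, and mutually abelian-unbordered (MAU) if it has neither. *)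

theory Defs
  imports Complex_Main
begin

datatype letter = a | b

type_synonym word = "letter list"

definition abel_eq :: "word \<Rightarrow> word \<Rightarrow> bool" where
  "abel_eq x y \<longleftrightarrow> (\<forall>c. count_list x c = count_list y c)"

definition proper_prefix :: "word \<Rightarrow> word \<Rightarrow> bool" where
  "proper_prefix x u \<longleftrightarrow> (\<exists>z. u = x @ z \<and> z \<noteq> [])"

definition proper_suffix :: "word \<Rightarrow> word \<Rightarrow> bool" where
  "proper_suffix x u \<longleftrightarrow> (\<exists>z. u = z @ x \<and> z \<noteq> [])"

definition internal_abel_border :: "word \<Rightarrow> word \<Rightarrow> word \<Rightarrow> word \<Rightarrow> bool" where
  "internal_abel_border u v x y \<longleftrightarrow>
     x \<noteq> [] \<and> proper_suffix x u \<and> proper_prefix y v \<and> abel_eq x y"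

definition external_abel_border :: "word \<Rightarrow> word \<Rightarrow> word \<Rightarrow> word \<Rightarrow> bool" where
  "external_abel_border u v x y \<longleftrightarrow>
     x \<noteq> [] \<and> proper_prefix x u \<and> proper_suffix y v \<and> abel_eq x y"

definition MAU :: "word \<Rightarrow> word \<Rightarrow> bool" where
  "MAU u v \<longleftrightarrow> \<not> (\<exists>x y. internal_abel_border u v x y) \<and>
                 \<not> (\<exists>x y. external_abel_border u v x y)"

definition M_eq :: "nat \<Rightarrow> nat" where
  "M_eq n = card {(u, v). length u = n \<and> length v = n \<and> abel_eq u v \<and> MAU u v}"

end

theory Submission
  imports Defs
begin

definition cb :: "nat \<Rightarrow> int \<Rightarrow> int" where
  "cb N j = (if j < 0 then 0 else int (N choose nat j))"

lemma cb_Suc: "cb (Suc N) j = cb N j + cb N (j - 1)"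
proof (cases "j \<le> 0")
  case True
  then show ?thesis by (cases "j = 0") (auto simp: cb_def)
next
  case False
  then have "nat j = Suc (nat (j - 1))" by simp
  then show ?thesis using False by (simp add: cb_def)
qed

definition F :: "nat \<Rightarrow> int \<Rightarrow> int" where
  "F L h = cb (2*L+1) (int L + 1 - h) - cb (2*L+1) (int L - h)"

lemma F_rec: "F (Suc L) h = F L (h-1) + 2 * F L h + F L (h+1)"
proof -
  define s where "s = 2*L+1"
  define j where "j = int L + 2 - h"
  have e: "2 * Suc L + 1 = Suc (Suc s)" by (simp add: s_def)
  have "F (Suc L) h = cb (Suc (Suc s)) j - cb (Suc (Suc s)) (j - 1)"
    unfolding F_def e j_def by (simp add: algebra_simps)
  also have "\<dots> = cb s j + 2 * cb s (j-1) + cb s (j-2) - (cb s (j-1) + 2 * cb s (j-2) + cb s (j-3))"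
    by (simp add: cb_Suc algebra_simps)
  also have "\<dots> = F L (h-1) + 2 * F L h + F L (h+1)"
    unfolding F_def s_def[symmetric] j_def by (simp add: algebra_simps)
  finally show ?thesis .
qed

lemma F_zero: "F L 0 = 0"
proof -
  have "(2*L+1) choose (L+1) = (2*L+1) choose L"
    using binomial_symmetric[of L "2*L+1"] by simp
  then show ?thesis unfolding F_def cb_def by (simp add: nat_add_distrib)
qed

definition ht :: "(letter \<times> letter) list \<Rightarrow> int" where
  "ht w = int (count_list (map fst w) a) - int (count_list (map snd w) a)"

definition dl :: "letter \<times> letter \<Rightarrow> int" where
  "dl c = (if fst c = a then 1 else 0) - (if snd c = a then 1 else 0)"

lemma ht_Nil[simp]: "ht [] = 0" by (simp add: ht_def)
lemma ht_snoc[simp]: "ht (w @ [c]) = ht w + dl c"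
  by (cases c) (simp add: ht_def dl_def)

lemma dl_bound: "-1 \<le> dl c \<and> dl c \<le> 1" by (simp add: dl_def)

definition Pset :: "nat \<Rightarrow> int \<Rightarrow> (letter \<times> letter) list set" where
  "Pset L h = {w. length w = L \<and> (\<forall>j. 1 \<le> j \<and> j \<le> L \<longrightarrow> ht (take j w) \<ge> 1) \<and> ht w = h}"

lemma fin_len: "finite {w :: (letter \<times> letter) list. length w = L}"
proof -
  have "{w :: (letter \<times> letter) list. length w = L} \<subseteq> {w. set w \<subseteq> {a,b} \<times> {a,b} \<and> length w = L}"
  proof -
    have "\<And>x::letter. x \<in> {a,b}" by (case_tac x) auto
    then have "\<And>p::letter\<times>letter. p \<in> {a,b}\<times>{a,b}" by (metis mem_Sigma_iff prod.collapse)
    then show ?thesis by blast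
  qed
  moreover have "finite {w :: (letter \<times> letter) list. set w \<subseteq> {a,b} \<times> {a,b} \<and> length w = L}"
    by (rule finite_lists_length_eq) simp
  ultimately show ?thesis by (rule finite_subset)
qed

lemma fin_Pset: "finite (Pset L h)"
  by (rule finite_subset[OF _ fin_len[of L]]) (auto simp: Pset_def)

lemma Pset0: "Pset 0 h = (if h = 0 then {[]} else {})"
  by (auto simp: Pset_def)

lemma Pset_neg: assumes "h < 1" shows "Pset (Suc L) h = {}"
proof (rule ccontr)
  assume "Pset (Suc L) h \<noteq> {}"
  then obtain w where w: "w \<in> Pset (Suc L) h" by blast
  then have "ht (take (Suc L) w) \<ge> 1" and "length w = Suc L" and "ht w = h" by (auto simp: Pset_def)
  then show False using assms by simp
qed

lemma take_snoc_le: "j \<le> length w \<Longrightarrow> take j (w @ [c]) = take j w"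
  by simp

lemma Pset_snoc: "w @ [c] \<in> Pset (Suc L) h \<longleftrightarrow> w \<in> Pset L (h - dl c) \<and> h \<ge> 1"
proof
  assume A: "w @ [c] \<in> Pset (Suc L) h"
  then have len: "length w = L" and all: "\<And>j. 1 \<le> j \<Longrightarrow> j \<le> Suc L \<Longrightarrow> ht (take j (w@[c])) \<ge> 1"
    and hh: "ht (w@[c]) = h" by (auto simp: Pset_def)
  have "ht (take j w) \<ge> 1" if "1 \<le> j" "j \<le> L" for j
    using all[of j] that len by simp
  moreover have "ht (w@[c]) \<ge> 1" using all[of "Suc L"] len by simp
  ultimately show "w \<in> Pset L (h - dl c) \<and> h \<ge> 1" using hh len by (auto simp: Pset_def)
next
  assume B: "w \<in> Pset L (h - dl c) \<and> h \<ge> 1"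
  then have len: "length w = L" by (simp add: Pset_def)
  have "ht (take j (w@[c])) \<ge> 1" if "1 \<le> j" "j \<le> Suc L" for j
  proof (cases "j = Suc L")
    case True then show ?thesis using B len by (simp add: Pset_def)
  next
    case False then show ?thesis using B len that by (auto simp: Pset_def)
  qed
  then show "w @ [c] \<in> Pset (Suc L) h" using B len by (auto simp: Pset_def)
qed


definition img :: "letter \<times> letter \<Rightarrow> (letter \<times> letter) list set \<Rightarrow> (letter \<times> letter) list set" where
  "img c S = (\<lambda>w. w @ [c]) ` S"

lemma card_img: "card (img c S) = card S"
  unfolding img_def by (rule card_image) (simp add: inj_on_def)

lemma fin_img: "finite S \<Longrightarrow> finite (img c S)" by (simp add: img_def)

lemma img_disj: "c \<noteq> d \<Longrightarrow> img c S \<inter> img d T = {}"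
  by (auto simp: img_def)

lemma Pset_dec: assumes h: "h \<ge> 1"
  shows "Pset (Suc L) h = img (a,b) (Pset L (h-1)) \<union> img (a,a) (Pset L h) \<union> img (b,b) (Pset L h) \<union> img (b,a) (Pset L (h+1))"
    (is "?l = ?r")
proof
  show "?l \<subseteq> ?r"
  proof
    fix x assume x: "x \<in> ?l"
    then have "x \<noteq> []" by (auto simp: Pset_def)
    then obtain w c where xw: "x = w @ [c]" by (metis rev_exhaust)
    then have w: "w \<in> Pset L (h - dl c)" using x Pset_snoc by blast
    obtain p q where c: "c = (p,q)" by (cases c)
    show "x \<in> ?r"
      using w unfolding xw c img_def by (cases p; cases q) (auto simp: dl_def)
  qed
next
  show "?r \<subseteq> ?l"
    using h by (auto simp: img_def Pset_snoc dl_def)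
qed

lemma Pset_card: assumes h: "h \<ge> 1"
  shows "int (card (Pset (Suc L) h)) = int (card (Pset L (h-1))) + 2 * int (card (Pset L h)) + int (card (Pset L (h+1)))"
proof -
  let ?A = "img (a,b) (Pset L (h-1))" and ?B = "img (a,a) (Pset L h)"
    and ?C = "img (b,b) (Pset L h)" and ?D = "img (b,a) (Pset L (h+1))"
  have f: "finite ?A" "finite ?B" "finite ?C" "finite ?D" by (simp_all add: fin_img fin_Pset)
  have "card (?A \<union> ?B \<union> ?C \<union> ?D) = card (?A \<union> ?B \<union> ?C) + card ?D"
    by (rule card_Un_disjoint) (use f in \<open>auto simp: img_def\<close>)
  also have "card (?A \<union> ?B \<union> ?C) = card (?A \<union> ?B) + card ?C"
    by (rule card_Un_disjoint) (use f in \<open>auto simp: img_def\<close>)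
  also have "card (?A \<union> ?B) = card ?A + card ?B"
    by (rule card_Un_disjoint) (use f in \<open>auto simp: img_def\<close>)
  finally show ?thesis unfolding Pset_dec[OF h] card_img by simp
qed

lemma Pset_F: "h \<ge> 0 \<Longrightarrow> int (card (Pset (Suc L) h)) = F L h"
proof (induction L arbitrary: h)
  case 0
  show ?case
  proof (cases "h \<ge> 1")
    case True
    then show ?thesis unfolding Pset_card[OF True] by (auto simp: Pset0 F_def cb_def)
  next
    case False
    then have "h = 0" using 0 by simp
    then show ?thesis using Pset_neg[of h 0] F_zero[of 0] by simp
  qed
next
  case (Suc L)
  show ?case
  proof (cases "h \<ge> 1")
    case True
    then show ?thesis using Pset_card[OF True, of "Suc L"] F_rec[of L h] Suc.IH[of "h-1"] Suc.IH[of h] Suc.IH[of "h+1"] by simp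
  next
    case False
    then have "h = 0" using Suc.prems by simp
    then show ?thesis using Pset_neg[of h "Suc L"] F_zero[of "Suc L"] by simp
  qed
qed


definition Tset :: "nat \<Rightarrow> (letter \<times> letter) list set" where
  "Tset n = {w. length w = n \<and> ht w = 0 \<and> (\<forall>j. 1 \<le> j \<and> j < n \<longrightarrow> ht (take j w) \<noteq> 0)}"
definition Tpos :: "nat \<Rightarrow> (letter \<times> letter) list set" where
  "Tpos n = {w. length w = n \<and> ht w = 0 \<and> (\<forall>j. 1 \<le> j \<and> j < n \<longrightarrow> ht (take j w) \<ge> 1)}"
definition Tneg :: "nat \<Rightarrow> (letter \<times> letter) list set" where
  "Tneg n = {w. length w = n \<and> ht w = 0 \<and> (\<forall>j. 1 \<le> j \<and> j < n \<longrightarrow> ht (take j w) \<le> -1)}"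

definition sw :: "letter \<times> letter \<Rightarrow> letter \<times> letter" where "sw p = (snd p, fst p)"

lemma ht_sw: "ht (map sw w) = - ht w"
  by (simp add: ht_def sw_def o_def)

lemma sw_sw: "map sw (map sw w) = w"
  by (induction w) (auto simp: sw_def)

lemma ht_step: "j < length w \<Longrightarrow> ht (take (Suc j) w) \<le> ht (take j w) + 1 \<and> ht (take (Suc j) w) \<ge> ht (take j w) - 1"
  using dl_bound[of "w ! j"] by (simp add: take_Suc_conv_app_nth)

lemma sign_pos:
  assumes w: "w \<in> Tset n" and p: "ht (take 1 w) > 0"
  shows "1 \<le> k \<Longrightarrow> k < n \<Longrightarrow> ht (take k w) \<ge> 1"
proof (induction k)
  case 0 then show ?case by simp
next
  case (Suc k)
  show ?case
  proof (cases "k = 0")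
    case True then show ?thesis using p by simp
  next
    case False
    then have "ht (take k w) \<ge> 1" using Suc by simp
    moreover have "k < length w" using Suc.prems w by (simp add: Tset_def)
    moreover have "ht (take (Suc k) w) \<noteq> 0" using w Suc.prems by (simp add: Tset_def)
    ultimately show ?thesis using ht_step[of k w] by linarith
  qed
qed

lemma Tset_split: assumes "n \<ge> 2" shows "Tset n = Tpos n \<union> Tneg n" and "Tpos n \<inter> Tneg n = {}"
proof -
  show "Tpos n \<inter> Tneg n = {}" using assms by (force simp: Tpos_def Tneg_def)
  show "Tset n = Tpos n \<union> Tneg n"
  proof
    show "Tpos n \<union> Tneg n \<subseteq> Tset n" by (force simp: Tpos_def Tneg_def Tset_def)
  next
    show "Tset n \<subseteq> Tpos n \<union> Tneg n"
    proof
      fix w assume w: "w \<in> Tset n"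
      have ne: "ht (take 1 w) \<noteq> 0" using w assms by (simp add: Tset_def)
      show "w \<in> Tpos n \<union> Tneg n"
      proof (cases "ht (take 1 w) > 0")
        case True
        then have "w \<in> Tpos n" using sign_pos[OF w True] w by (auto simp: Tpos_def Tset_def)
        then show ?thesis by simp
      next
        case False
        have w': "map sw w \<in> Tset n" using w by (simp add: Tset_def ht_sw take_map)
        have "ht (take 1 (map sw w)) > 0" using False ne by (simp add: ht_sw take_map)
        then have "\<forall>k. 1 \<le> k \<and> k < n \<longrightarrow> ht (take k (map sw w)) \<ge> 1" using sign_pos[OF w'] by blast
        then have "w \<in> Tneg n" using w by (auto simp: Tneg_def Tset_def ht_sw take_map)
        then show ?thesis by simp
      qed
    qed
  qed
qed

lemma Tneg_img: "Tneg n = map sw ` Tpos n"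
proof
  show "map sw ` Tpos n \<subseteq> Tneg n" by (auto simp: Tneg_def Tpos_def ht_sw take_map)
next
  show "Tneg n \<subseteq> map sw ` Tpos n"
  proof
    fix w assume "w \<in> Tneg n"
    then have "map sw w \<in> Tpos n" by (auto simp: Tneg_def Tpos_def ht_sw take_map)
    then show "w \<in> map sw ` Tpos n" using sw_sw[of w] by (metis image_eqI)
  qed
qed

lemma card_Tneg: "card (Tneg n) = card (Tpos n)"
  unfolding Tneg_img by (rule card_image) (metis inj_onI sw_sw)

lemma fin_Tpos: "finite (Tpos n)"
  by (rule finite_subset[OF _ fin_len[of n]]) (auto simp: Tpos_def)

lemma Tpos_img: assumes m: "m \<ge> 1" shows "Tpos (Suc m) = img (b,a) (Pset m 1)"
proof
  show "Tpos (Suc m) \<subseteq> img (b,a) (Pset m 1)"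
  proof
    fix x assume x: "x \<in> Tpos (Suc m)"
    then have "x \<noteq> []" by (auto simp: Tpos_def)
    then obtain w c where xw: "x = w @ [c]" by (metis rev_exhaust)
    have len: "length w = m" using x xw by (simp add: Tpos_def)
    have all: "ht (take j w) \<ge> 1" if "1 \<le> j" "j \<le> m" for j
    proof -
      have "ht (take j x) \<ge> 1" using x that by (simp add: Tpos_def)
      then show ?thesis using xw len that by simp
    qed
    have h1: "ht w \<ge> 1" using all[of m] m len by simp
    have h0: "ht w + dl c = 0" using x xw by (simp add: Tpos_def)
    have "dl c = -1" using h1 h0 dl_bound[of c] by linarith
    then have c: "c = (b,a)"
    proof -
      obtain p q where pq: "c = (p,q)" by (cases c)
      show ?thesis using \<open>dl c = -1\<close> unfolding pq by (cases p; cases q) (auto simp: dl_def)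
    qed
    have "w \<in> Pset m 1" using all len h1 h0 c by (simp add: Pset_def dl_def)
    then show "x \<in> img (b,a) (Pset m 1)" using xw c by (simp add: img_def)
  qed
next
  show "img (b,a) (Pset m 1) \<subseteq> Tpos (Suc m)"
  proof
    fix x assume "x \<in> img (b,a) (Pset m 1)"
    then obtain w where x: "x = w @ [(b,a)]" and w: "w \<in> Pset m 1" by (auto simp: img_def)
    then show "x \<in> Tpos (Suc m)" by (auto simp: Tpos_def Pset_def dl_def)
  qed
qed

lemma card_Tset: assumes "m \<ge> 1" shows "int (card (Tset (Suc m))) = 2 * F (m - 1) 1"
proof -
  have "card (Tset (Suc m)) = card (Tpos (Suc m)) + card (Tneg (Suc m))"
    using Tset_split[of "Suc m"] assms fin_Tpos card_Un_disjoint
    by (metis Suc_le_mono card_Tneg finite_Un one_add_one plus_1_eq_Suc Tneg_img finite_imageI)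
  also have "\<dots> = 2 * card (Pset m 1)" using card_Tneg Tpos_img[OF assms] card_img by simp
  finally show ?thesis using Pset_F[of 1 "m-1"] assms by simp
qed


lemma cnt_len: "count_list x a + count_list x b = length x"
proof (induction x)
  case Nil then show ?case by simp
next
  case (Cons y x) then show ?case by (cases y) auto
qed

lemma abel_iff: "abel_eq x y \<longleftrightarrow> length x = length y \<and> count_list x a = count_list y a"
proof
  assume "abel_eq x y"
  then have "count_list x a = count_list y a" "count_list x b = count_list y b" by (auto simp: abel_eq_def)
  then show "length x = length y \<and> count_list x a = count_list y a" using cnt_len[of x] cnt_len[of y] by simp
next
  assume A: "length x = length y \<and> count_list x a = count_list y a"
  then have "count_list x b = count_list y b" using cnt_len[of x] cnt_len[of y] by simp
  then show "abel_eq x y" using A unfolding abel_eq_def by (metis letter.exhaust)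
qed

lemma cnt_drop: "count_list (drop m x) c = count_list x c - count_list (take m x) c"
  by (metis append_take_drop_id count_list_append diff_add_inverse)

lemma cnt_take_le: "count_list (take m x) c \<le> count_list x c"
  by (metis append_take_drop_id count_list_append le_add1)

lemma internal_iff: assumes "length u = n" "length v = n"
  shows "(\<exists>x y. internal_abel_border u v x y) \<longleftrightarrow> (\<exists>k. 1 \<le> k \<and> k < n \<and> count_list (drop (n-k) u) a = count_list (take k v) a)"
proof
  assume "\<exists>x y. internal_abel_border u v x y"
  then obtain x y z z' where x: "x \<noteq> []" and u: "u = z @ x" "z \<noteq> []" and v: "v = y @ z'" "z' \<noteq> []"
    and ab: "abel_eq x y"
    unfolding internal_abel_border_def proper_suffix_def proper_prefix_def by blast
  define k where "k = length x"
  have ly: "length y = k" using ab k_def by (simp add: abel_iff)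
  have k: "1 \<le> k" "k < n" using x u v assms k_def by (auto simp: Suc_le_eq)
  have "x = drop (n-k) u" using u assms k_def by simp
  moreover have "y = take k v" using v ly by simp
  ultimately show "\<exists>k. 1 \<le> k \<and> k < n \<and> count_list (drop (n-k) u) a = count_list (take k v) a"
    using k ab by (auto simp: abel_iff)
next
  assume "\<exists>k. 1 \<le> k \<and> k < n \<and> count_list (drop (n-k) u) a = count_list (take k v) a"
  then obtain k where k: "1 \<le> k" "k < n" and e: "count_list (drop (n-k) u) a = count_list (take k v) a" by blast
  have "internal_abel_border u v (drop (n-k) u) (take k v)"
  proof -
    have "proper_suffix (drop (n-k) u) u" unfolding proper_suffix_def
      using k assms by (intro exI[of _ "take (n-k) u"]) (simp, metis Suc_le_eq less_nat_zero_code list.size(3))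
    moreover have "proper_prefix (take k v) v" unfolding proper_prefix_def
      using k assms by (intro exI[of _ "drop k v"]) simp
    moreover have "u \<noteq> []" "v \<noteq> []" using k assms by auto
    ultimately show ?thesis unfolding internal_abel_border_def abel_iff using k e assms by simp
  qed
  then show "\<exists>x y. internal_abel_border u v x y" by blast
qed

lemma external_iff: assumes "length u = n" "length v = n"
  shows "(\<exists>x y. external_abel_border u v x y) \<longleftrightarrow> (\<exists>k. 1 \<le> k \<and> k < n \<and> count_list (take k u) a = count_list (drop (n-k) v) a)"
proof
  assume "\<exists>x y. external_abel_border u v x y"
  then obtain x y z z' where x: "x \<noteq> []" and u: "u = x @ z" "z \<noteq> []" and v: "v = z' @ y" "z' \<noteq> []"
    and ab: "abel_eq x y"
    unfolding external_abel_border_def proper_suffix_def proper_prefix_def by blast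
  define k where "k = length x"
  have ly: "length y = k" using ab k_def by (simp add: abel_iff)
  have k: "1 \<le> k" "k < n" using x u v assms k_def by (auto simp: Suc_le_eq)
  have "x = take k u" using u k_def by simp
  moreover have "y = drop (n-k) v" using v ly assms by simp
  ultimately show "\<exists>k. 1 \<le> k \<and> k < n \<and> count_list (take k u) a = count_list (drop (n-k) v) a"
    using k ab by (auto simp: abel_iff)
next
  assume "\<exists>k. 1 \<le> k \<and> k < n \<and> count_list (take k u) a = count_list (drop (n-k) v) a"
  then obtain k where k: "1 \<le> k" "k < n" and e: "count_list (take k u) a = count_list (drop (n-k) v) a" by blast
  have "external_abel_border u v (take k u) (drop (n-k) v)"
  proof -
    have "proper_suffix (drop (n-k) v) v" unfolding proper_suffix_def
      using k assms by (intro exI[of _ "take (n-k) v"]) (simp, metis Suc_le_eq less_nat_zero_code list.size(3))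
    moreover have "proper_prefix (take k u) u" unfolding proper_prefix_def
      using k assms by (intro exI[of _ "drop k u"]) simp
    moreover have "u \<noteq> []" "v \<noteq> []" using k assms by auto
    ultimately show ?thesis unfolding external_abel_border_def abel_iff using k e assms by simp
  qed
  then show "\<exists>x y. external_abel_border u v x y" by blast
qed

lemma ht_zip: assumes "length u = n" "length v = n"
  shows "ht (take k (zip u (rev v))) = int (count_list (take k u) a) - int (count_list (take k (rev v)) a)"
  using assms by (simp add: ht_def take_zip)

lemma take_rev_cnt: assumes "length v = n" "k \<le> n"
  shows "count_list (take k (rev v)) a = count_list (drop (n-k) v) a"
proof -
  have "rev (drop (n-k) v) = take k (rev v)" using assms by (simp add: rev_drop)
  then show ?thesis by (metis count_list_rev)
qed

lemma key: assumes lu: "length u = n" and lv: "length v = n"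
  shows "abel_eq u v \<and> MAU u v \<longleftrightarrow> zip u (rev v) \<in> Tset n"
proof -
  define D where "D k = ht (take k (zip u (rev v)))" for k
  have D: "D k = int (count_list (take k u) a) - int (count_list (drop (n-k) v) a)" if "k \<le> n" for k
    unfolding D_def ht_zip[OF lu lv] take_rev_cnt[OF lv that] ..
  have Dn: "D n = int (count_list u a) - int (count_list v a)" using D[of n] lu lv by simp
  have htw: "ht (zip u (rev v)) = D n" unfolding D_def using lu by simp
  have ab: "abel_eq u v \<longleftrightarrow> D n = 0" using Dn lu lv by (simp add: abel_iff)
  have ext: "(\<exists>x y. external_abel_border u v x y) \<longleftrightarrow> (\<exists>k. 1 \<le> k \<and> k < n \<and> D k = 0)"
  proof -
    have "\<forall>k. k < n \<longrightarrow> (count_list (take k u) a = count_list (drop (n-k) v) a \<longleftrightarrow> D k = 0)"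
      using D by auto
    then show ?thesis unfolding external_iff[OF lu lv] by blast
  qed
  have int: "D n = 0 \<Longrightarrow> (\<exists>x y. internal_abel_border u v x y) \<Longrightarrow> (\<exists>k. 1 \<le> k \<and> k < n \<and> D k = 0)"
  proof -
    assume d0: "D n = 0" and "\<exists>x y. internal_abel_border u v x y"
    then obtain k where k: "1 \<le> k" "k < n" and e: "count_list (drop (n-k) u) a = count_list (take k v) a"
      using internal_iff[OF lu lv] by blast
    have cu: "count_list u a = count_list v a" using Dn d0 by simp
    have "count_list (drop (n-k) u) a = count_list u a - count_list (take (n-k) u) a" by (rule cnt_drop)
    moreover have "count_list (take k v) a = count_list v a - count_list (drop k v) a"
      by (metis append_take_drop_id count_list_append diff_add_inverse2)
    moreover have "n - (n-k) = k" using k by simp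
    moreover have "count_list (take (n-k) u) a \<le> count_list u a" by (rule cnt_take_le)
    moreover have "count_list (drop k v) a \<le> count_list v a" by (metis append_take_drop_id count_list_append le_add2)
    ultimately have "count_list (take (n-k) u) a = count_list (drop k v) a" using e cu by arith
    then have "D (n-k) = 0" using D[of "n-k"] k by simp
    then show ?thesis using k by (intro exI[of _ "n-k"]) simp
  qed
  have L: "length (zip u (rev v)) = n" using lu lv by simp
  show ?thesis
  proof
    assume A: "abel_eq u v \<and> MAU u v"
    then have "D n = 0" "\<forall>k. 1 \<le> k \<and> k < n \<longrightarrow> D k \<noteq> 0" using ab ext unfolding MAU_def by blast+
    then show "zip u (rev v) \<in> Tset n" unfolding Tset_def using L htw D_def by simp
  next
    assume B: "zip u (rev v) \<in> Tset n"
    then have d0: "D n = 0" and dk: "\<forall>k. 1 \<le> k \<and> k < n \<longrightarrow> D k \<noteq> 0"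
      unfolding Tset_def using htw D_def by auto
    then show "abel_eq u v \<and> MAU u v" unfolding MAU_def using ab ext int by blast
  qed
qed

lemma Mset_eq: "{(u, v). length u = n \<and> length v = n \<and> abel_eq u v \<and> MAU u v}
   = (\<lambda>w. (map fst w, rev (map snd w))) ` Tset n"
proof
  show "{(u, v). length u = n \<and> length v = n \<and> abel_eq u v \<and> MAU u v} \<subseteq> (\<lambda>w. (map fst w, rev (map snd w))) ` Tset n"
  proof
    fix p assume "p \<in> {(u, v). length u = n \<and> length v = n \<and> abel_eq u v \<and> MAU u v}"
    then obtain u v where p: "p = (u,v)" and l: "length u = n" "length v = n" and m: "abel_eq u v \<and> MAU u v" by blast
    have "zip u (rev v) \<in> Tset n" using key[OF l] m by blast
    moreover have "p = (map fst (zip u (rev v)), rev (map snd (zip u (rev v))))" using p l by simp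
    ultimately show "p \<in> (\<lambda>w. (map fst w, rev (map snd w))) ` Tset n" by blast
  qed
next
  show "(\<lambda>w. (map fst w, rev (map snd w))) ` Tset n \<subseteq> {(u, v). length u = n \<and> length v = n \<and> abel_eq u v \<and> MAU u v}"
  proof
    fix p assume "p \<in> (\<lambda>w. (map fst w, rev (map snd w))) ` Tset n"
    then obtain w where w: "w \<in> Tset n" and p: "p = (map fst w, rev (map snd w))" by blast
    have l: "length (map fst w) = n" "length (rev (map snd w)) = n" using w by (auto simp: Tset_def)
    have "zip (map fst w) (rev (rev (map snd w))) = w" by (simp add: zip_map_fst_snd)
    then have "abel_eq (map fst w) (rev (map snd w)) \<and> MAU (map fst w) (rev (map snd w))"
      using key[OF l] w by simp
    then show "p \<in> {(u, v). length u = n \<and> length v = n \<and> abel_eq u v \<and> MAU u v}" using p l by simp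
  qed
qed

lemma M_eq_card: "M_eq n = card (Tset n)"
  unfolding M_eq_def Mset_eq
proof (rule card_image, rule inj_onI)
  fix x y :: "(letter \<times> letter) list"
  assume "(map fst x, rev (map snd x)) = (map fst y, rev (map snd y))"
  then have "map fst x = map fst y" "map snd x = map snd y" by auto
  then show "x = y" by (metis zip_map_fst_snd)
qed


lemma fid: "int (Suc p) * F p 1 = int ((2*Suc p) choose (Suc p + 1))"
proof (cases p)
  case 0 then show ?thesis by (simp add: F_def cb_def numeral_2_eq_2)
next
  case (Suc q)
  have F: "F p 1 = int ((2*q+3) choose (Suc q)) - int ((2*q+3) choose q)"
  proof -
    have e: "2*q+3 = Suc (Suc (Suc (2 * q)))" by simp
    show ?thesis unfolding Suc F_def cb_def e by (simp add: nat_add_distrib del: binomial_Suc_Suc)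
  qed
  have "(2*Suc p) choose (Suc p + 1) = (2*Suc p) choose (2*Suc p - (Suc p + 1))"
    by (rule binomial_symmetric) simp
  also have "\<dots> = Suc (2*q+3) choose Suc q"
  proof -
    have "2*Suc p = Suc (2*q+3)" "2*Suc p - (Suc p+1) = Suc q" using Suc by simp_all
    then show ?thesis by (simp only:)
  qed
  also have "\<dots> = ((2*q+3) choose q) + ((2*q+3) choose (Suc q))" by (rule binomial_Suc_Suc)
  finally have R: "(2*Suc p) choose (Suc p + 1) = ((2*q+3) choose q) + ((2*q+3) choose (Suc q))" .
  have K: "Suc q * ((2*q+3) choose (Suc q)) = (q+3) * ((2*q+3) choose q)"
  proof -
    have e1: "Suc (q + Suc (Suc q)) = 2*q+3" by simp
    have e2: "Suc (Suc (Suc q)) = q+3" by simp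
    from Suc_times_binomial_add[of q "Suc (Suc q)"] show ?thesis by (simp only: e1 e2)
  qed
  have K': "(int q + 1) * int ((2*q+3) choose (Suc q)) = (int q + 3) * int ((2*q+3) choose q)"
    using arg_cong[OF K, of int] by (simp add: algebra_simps)
  define X where "X = int ((2*q+3) choose (Suc q))"
  define Y where "Y = int ((2*q+3) choose q)"
  have F': "F p 1 = X - Y" using F X_def Y_def by simp
  have R': "int ((2*Suc p) choose (Suc p + 1)) = Y + X" using R X_def Y_def by simp
  have K2: "(int q + 1) * X = (int q + 3) * Y" using K' X_def Y_def by simp
  have S: "int (Suc p) = int q + 2" using Suc by simp
  show ?thesis unfolding F' R' S using K2 by (simp add: algebra_simps)
qed

lemma vsum: "(\<Sum>i=1..m. (m choose i) * (m choose (i - 1))) = (2*m) choose (m+1)"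
proof -
  have "(2*m) choose (m+1) = (\<Sum>k\<le>m+1. (m choose k) * (m choose (m + 1 - k)))"
    unfolding mult_2 by (rule vandermonde[symmetric])
  also have "\<dots> = (\<Sum>k\<in>{1..m}. (m choose k) * (m choose (m + 1 - k)))"
    by (rule sum.mono_neutral_right) (auto simp: not_le Suc_le_eq)
  also have "\<dots> = (\<Sum>i=1..m. (m choose i) * (m choose (i - 1)))"
  proof (rule sum.cong[OF refl])
    fix k assume k: "k \<in> {1..m}"
    have "m choose (k - 1) = m choose (m - (k - 1))" by (rule binomial_symmetric) (use k in auto)
    also have "m - (k - 1) = m + 1 - k" using k by auto
    finally show "(m choose k) * (m choose (m + 1 - k)) = (m choose k) * (m choose (k - 1))" by simp
  qed
  finally show ?thesis by simp
qed

theorem mainTheorem9: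
  fixes n :: nat
  assumes "n \<ge> 2"
  shows "real (M_eq n) =
    2 * (\<Sum>i=1..n-1. (1 / real (n - 1)) * real ((n - 1) choose i) * real ((n - 1) choose (i - 1)))"
proof -
  obtain p where n: "n = Suc (Suc p)" using assms by (metis add_2_eq_Suc le_Suc_ex)
  define m where "m = Suc p"
  have nm: "n = Suc m" "n - 1 = m" "m \<ge> 1" using n m_def by auto
  have "int (M_eq n) = 2 * F p 1" using card_Tset[of m] nm M_eq_card m_def by simp
  then have L: "real (M_eq n) = 2 * real_of_int (F p 1)" by (metis of_int_of_nat_eq of_int_mult of_int_numeral)
  have "real_of_int (int m * F p 1) = real ((2*m) choose (m+1))" using fid[of p] m_def by simp
  then have Fr: "real_of_int (F p 1) = real ((2*m) choose (m+1)) / real m" using nm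
    by (simp add: field_simps)
  have "(\<Sum>i=1..m. (1 / real m) * real (m choose i) * real (m choose (i - 1)))
      = (1 / real m) * real (\<Sum>i=1..m. (m choose i) * (m choose (i - 1)))"
    by (simp add: sum_distrib_left mult.assoc)
  also have "\<dots> = real ((2*m) choose (m+1)) / real m" unfolding vsum by simp
  finally show ?thesis unfolding nm(2) L Fr by simp
qed

end
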